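(* Let $\beta>0$, $\rho\ge0$, and let $A^C_\mu$, $A^A_\mu$ be the Harrington–Shepard SU(2) caloron and anticaloron (with the same $\beta,\rho$, centered at the origin with zero temporal phase). For $\alpha\in\{C,A\}$ and $a\in\{1,2,3\}$ define $$I^a_\alpha(\tau,\vec x)=\mathrm{tr}\Big(t^a\,F^\alpha_{\mu\nu}(\tau,\vec 0)\,\{(\tau,\vec 0),(\tau,\vec x)\}_\alpha\,F^\alpha_{\mu\nu}(\tau,\vec x)\,\{(\tau,\vec x),(\tau,\vec 0)\}_\alpha\Big)$$ (summed over $\mu,\nu$). Then, wherever these expressions are defined, $I^a_A(\tau,\vec x)=I^a_C(\tau,-\vec x)$ for all $a$; i.e. the anticaloron integrand is obtained from the caloron integrand by the parity transformation $\vec x\to-\vec x$.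
   Context: Gauge group SU(2), $t_a=\frac12\sigma_a$ (Pauli matrices), summation over repeated indices, Euclidean coordinates $x_4=\tau$, $\mu,\nu\in\{1,2,3,4\}$. 't Hooft symbols: $\eta^a_{\mu\nu}=\epsilon^a_{\mu\nu}+\delta^a_\mu\delta_{\nu4}-\delta^a_\nu\delta_{\mu4}$, $\bar\eta^a_{\mu\nu}=\epsilon^a_{\mu\nu}-\delta^a_\mu\delta_{\nu4}+\delta^a_\nu\delta_{\mu4}$, where $\epsilon^a_{\mu\nu}=\epsilon_{a\mu\nu}$ for $\mu,\nu\in\{1,2,3\}$ and $0$ otherwise. Prepotential $\Pi(\tau,r)=1+\frac{\pi\rho^2}{\beta r}\frac{\sinh(2\pi r/\beta)}{\cosh(2\pi r/\beta)-\cos(2\pi\tau/\beta)}$, $r=|\vec x|$. Caloron $A^C_\mu=\bar\eta^a_{\mu\nu}t_a\partial_\nu\ln\Pi$, anticaloron $A^A_\mu=\eta^a_{\mu\nu}t_a\partial_\nu\ln\Pi$. Field strength $F_{\mu\nu}=\partial_\mu A_\nu-\partial_\nu A_\mu-i[A_\mu,A_\nu]$. The Wilson line $\{(\tau,\vec y),(\tau,\vec z)\}_\alpha$ is the path-ordered exponential $\mathcal P\exp[i\int dz_\mu A^\alpha_\mu]$ along the straight segment from $(\tau,\vec y)$ to $(\tau,\vec z)$. *)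

theory Defs
  imports "HOL-Analysis.Analysis"
begin

text \<open>Euclidean points are pairs (tau, x) with tau the Euclidean time x_4 and
  x in R^3.  Lorentz indices mu are natural numbers in {1,2,3,4}; spatial
  index k in {1,2,3} refers to the component x $ (of_nat k) (the elements
  of_nat 1, of_nat 2, of_nat 3 of the numeral type 3 are pairwise distinct).\<close>

type_synonym point = "real \<times> (real^3)"
type_synonym mat2 = "(complex^2)^2"

definition sidx :: "nat \<Rightarrow> 3" where
  "sidx k = of_nat k"

definition edir :: "nat \<Rightarrow> point" where
  "edir \<mu> = (if \<mu> = 4 then (1, 0) else (0, axis (sidx \<mu>) 1))"

definition pd :: "nat \<Rightarrow> (point \<Rightarrow> real) \<Rightarrow> point \<Rightarrow> real" where
  "pd \<mu> f p = deriv (\<lambda>h. f (p + h *\<^sub>R edir \<mu>)) 0"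

definition pdM :: "nat \<Rightarrow> (point \<Rightarrow> mat2) \<Rightarrow> point \<Rightarrow> mat2" where
  "pdM \<mu> f p = vector_derivative (\<lambda>h. f (p + h *\<^sub>R edir \<mu>)) (at 0)"

definition kd :: "nat \<Rightarrow> nat \<Rightarrow> real" where
  "kd i j = (if i = j then 1 else 0)"

definition levi :: "nat \<Rightarrow> nat \<Rightarrow> nat \<Rightarrow> real" where
  "levi a b c =
     (if (a,b,c) \<in> {(1,2,3),(2,3,1),(3,1,2)} then 1
      else if (a,b,c) \<in> {(1,3,2),(3,2,1),(2,1,3)} then -1 else 0)"

definition eps :: "nat \<Rightarrow> nat \<Rightarrow> nat \<Rightarrow> real" where
  "eps a \<mu> \<nu> = (if \<mu> \<in> {1,2,3} \<and> \<nu> \<in> {1,2,3} then levi a \<mu> \<nu> else 0)"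

definition eta :: "nat \<Rightarrow> nat \<Rightarrow> nat \<Rightarrow> real" where
  "eta a \<mu> \<nu> = eps a \<mu> \<nu> + kd a \<mu> * kd \<nu> 4 - kd a \<nu> * kd \<mu> 4"

definition etabar :: "nat \<Rightarrow> nat \<Rightarrow> nat \<Rightarrow> real" where
  "etabar a \<mu> \<nu> = eps a \<mu> \<nu> - kd a \<mu> * kd \<nu> 4 + kd a \<nu> * kd \<mu> 4"

definition pauli :: "nat \<Rightarrow> mat2" where
  "pauli a = (\<chi> i j.
     if a = 1 then (if i = j then 0 else 1)
     else if a = 2 then (if i = j then 0 else if i = 1 then - \<i> else \<i>)
     else if a = 3 then (if i \<noteq> j then 0 else if i = 1 then 1 else -1)
     else 0)"

definition tgen :: "nat \<Rightarrow> mat2" where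
  "tgen a = (1/2) *\<^sub>R pauli a"

definition cmul :: "complex \<Rightarrow> mat2 \<Rightarrow> mat2" where
  "cmul c M = (\<chi> i j. c * M $ i $ j)"

definition comm :: "mat2 \<Rightarrow> mat2 \<Rightarrow> mat2" where
  "comm X Y = X ** Y - Y ** X"

text \<open>Harrington-Shepard prepotential. At r = 0 the formula is extended by its
  limit (sinh(2 pi r/beta)/r -> 2 pi/beta), i.e. by continuity.\<close>
definition Prepot :: "real \<Rightarrow> real \<Rightarrow> real \<Rightarrow> real^3 \<Rightarrow> real" where
  "Prepot \<beta> \<rho> \<tau> x =
     (let r = norm x in
      if r = 0 then 1 + pi * \<rho>^2 / \<beta> * (2 * pi / \<beta>) / (1 - cos (2 * pi * \<tau> / \<beta>))
      else 1 + pi * \<rho>^2 / (\<beta> * r) *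
             (sinh (2 * pi * r / \<beta>) / (cosh (2 * pi * r / \<beta>) - cos (2 * pi * \<tau> / \<beta>))))"

definition lnPi :: "real \<Rightarrow> real \<Rightarrow> point \<Rightarrow> real" where
  "lnPi \<beta> \<rho> p = ln (Prepot \<beta> \<rho> (fst p) (snd p))"

text \<open>Gauge field A_mu = S^a_{mu nu} t_a d_nu ln Pi, with S = etabar (caloron)
  or S = eta (anticaloron).\<close>
definition gaugeA :: "(nat \<Rightarrow> nat \<Rightarrow> nat \<Rightarrow> real) \<Rightarrow> real \<Rightarrow> real \<Rightarrow> nat \<Rightarrow> point \<Rightarrow> mat2" where
  "gaugeA S \<beta> \<rho> \<mu> p =
     (\<Sum>a\<in>{1,2,3}. \<Sum>\<nu>\<in>{1,2,3,4}. (S a \<mu> \<nu> * pd \<nu> (lnPi \<beta> \<rho>) p) *\<^sub>R tgen a)"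

definition fieldF :: "(nat \<Rightarrow> nat \<Rightarrow> nat \<Rightarrow> real) \<Rightarrow> real \<Rightarrow> real \<Rightarrow> nat \<Rightarrow> nat \<Rightarrow> point \<Rightarrow> mat2" where
  "fieldF S \<beta> \<rho> \<mu> \<nu> p =
     pdM \<mu> (gaugeA S \<beta> \<rho> \<nu>) p - pdM \<nu> (gaugeA S \<beta> \<rho> \<mu>) p
     - cmul \<i> (comm (gaugeA S \<beta> \<rho> \<mu> p) (gaugeA S \<beta> \<rho> \<nu> p))"

text \<open>Wilson line {(tau,y),(tau,z)}: path-ordered exponential of
  i \<integral> dz_mu A_mu along the straight segment gamma(s) = (tau, y + s (z - y)),
  s in [0,1].  It is the value U(1) of the solution of
  U(0) = 1, U'(s) = U(s) (i A_k(gamma s) (z-y)_k), i.e. points earlier on the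
  path stand to the left.\<close>
definition wilson :: "(nat \<Rightarrow> nat \<Rightarrow> nat \<Rightarrow> real) \<Rightarrow> real \<Rightarrow> real \<Rightarrow> real \<Rightarrow> real^3 \<Rightarrow> real^3 \<Rightarrow> mat2" where
  "wilson S \<beta> \<rho> \<tau> y z =
     (THE W. \<exists>U. U 0 = mat 1 \<and> U 1 = W \<and>
        (\<forall>s\<in>{0..1}. (U has_vector_derivative
            (U s ** cmul \<i> (\<Sum>k\<in>{1,2,3}. ((z - y) $ sidx k) *\<^sub>R
                 gaugeA S \<beta> \<rho> k (\<tau>, y + s *\<^sub>R (z - y)))))
          (at s within {0..1})))"

definition integrandI :: "(nat \<Rightarrow> nat \<Rightarrow> nat \<Rightarrow> real) \<Rightarrow> real \<Rightarrow> real \<Rightarrow> nat \<Rightarrow> real \<Rightarrow> real^3 \<Rightarrow> complex" where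
  "integrandI S \<beta> \<rho> a \<tau> x =
     (\<Sum>\<mu>\<in>{1,2,3,4}. \<Sum>\<nu>\<in>{1,2,3,4}.
        trace (tgen a ** fieldF S \<beta> \<rho> \<mu> \<nu> (\<tau>, 0) ** wilson S \<beta> \<rho> \<tau> 0 x
               ** fieldF S \<beta> \<rho> \<mu> \<nu> (\<tau>, x) ** wilson S \<beta> \<rho> \<tau> x 0))"

end

theory Submission
  imports Defs
begin


definition PS :: "(nat \<Rightarrow> real) \<Rightarrow> real \<Rightarrow> real" where
  "PS c u = (\<Sum>n. c n * u^n)"
definition aS :: "real \<Rightarrow> nat \<Rightarrow> real" where
  "aS k m = k^(2*m+1) / fact(2*m+1)"
definition bC :: "real \<Rightarrow> nat \<Rightarrow> real" where
  "bC k m = k^(2*m) / fact(2*m)"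

lemma abs_pow_sq: "(\<bar>k::real\<bar> ^ n)\<^sup>2 = k\<^sup>2 ^ n"
proof -
  have "(\<bar>k\<bar>^n)^2 = \<bar>k\<bar>^(n*2)" by (rule power_mult[symmetric])
  also have "\<dots> = (\<bar>k\<bar>^2)^n" by (simp only: mult.commute[of n 2] power_mult)
  also have "\<dots> = (k^2)^n" by simp
  finally show ?thesis .
qed

lemma summable_aS: "summable (\<lambda>n. aS k n * y^n)"
proof (rule summable_comparison_test')
  show "summable (\<lambda>n. \<bar>k\<bar> * (inverse (fact n) * (k^2*\<bar>y\<bar>)^n))"
    by (intro summable_mult summable_exp)
  fix n :: nat
  have f: "fact n \<le> (fact (2*n+1) :: real)" by (intro fact_mono) auto
  have "norm (aS k n * y^n) = \<bar>k\<bar> * ((k^2*\<bar>y\<bar>)^n / fact (2*n+1))"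
    by (simp add: abs_pow_sq aS_def abs_mult power_abs power_mult power_mult_distrib power_add field_simps)
  also have "\<dots> \<le> \<bar>k\<bar> * ((k^2*\<bar>y\<bar>)^n / fact n)"
    by (intro mult_left_mono divide_left_mono f) auto
  finally show "norm (aS k n * y^n) \<le> \<bar>k\<bar> * (inverse (fact n) * (k^2*\<bar>y\<bar>)^n)"
    by (simp add: field_simps)
qed

lemma summable_bC: "summable (\<lambda>n. bC k n * y^n)"
proof (rule summable_comparison_test')
  show "summable (\<lambda>n. (inverse (fact n) * (k^2*\<bar>y\<bar>)^n))"
    by (intro summable_exp)
  fix n :: nat
  have f: "fact n \<le> (fact (2*n) :: real)" by (intro fact_mono) auto
  have "norm (bC k n * y^n) = ((k^2*\<bar>y\<bar>)^n / fact (2*n))"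
    by (simp add: abs_pow_sq bC_def abs_mult power_abs power_mult power_mult_distrib power_add field_simps)
  also have "\<dots> \<le> ((k^2*\<bar>y\<bar>)^n / fact n)"
    by (intro divide_left_mono f) auto
  finally show "norm (bC k n * y^n) \<le> (inverse (fact n) * (k^2*\<bar>y\<bar>)^n)"
    by (simp add: field_simps)
qed

lemma sums_even_iff: "(\<lambda>n. if even n then f (n div 2) else 0) sums x \<Longrightarrow> f sums (x::real)"
proof -
  assume "(\<lambda>n. if even n then f (n div 2) else 0) sums x"
  from LIMSEQ_linear[OF this[simplified sums_def] pos2, simplified sum_split_even_odd[simplified mult.commute]]
  show "f sums x" unfolding sums_def by auto
qed

lemma PS_bC: "PS (bC k) (r^2) = cosh (k*r)"
proof -
  have "(\<lambda>n. if even n then (k*r)^n /\<^sub>R fact n else 0) sums cosh (k*r)" by (rule cosh_converges)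
  hence "(\<lambda>n. if even n then (\<lambda>m. bC k m * (r^2)^m) (n div 2) else 0) sums cosh (k*r)"
    by (rule sums_cong[THEN iffD1, rotated])
       (auto simp: bC_def power_mult[symmetric] power_mult_distrib divide_inverse elim!: evenE)
  thus ?thesis unfolding PS_def by (rule sums_even_iff[THEN sums_unique, symmetric])
qed

lemma PS_aS: assumes "r \<noteq> 0" shows "PS (aS k) (r^2) = sinh (k*r) / r"
proof -
  let ?h = "\<lambda>n. if even n then 0 else (k*r)^n /\<^sub>R fact n"
  have "?h sums sinh (k*r)" by (rule sinh_converges)
  hence "(\<lambda>n. ?h (Suc n)) sums sinh (k*r)" by (subst sums_Suc_iff) simp
  hence "(\<lambda>n. if even n then (\<lambda>m. r * (aS k m * (r^2)^m)) (n div 2) else 0) sums sinh (k*r)"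
    by (rule sums_cong[THEN iffD1, rotated])
       (auto simp: aS_def power_mult[symmetric] power_mult_distrib divide_inverse elim!: evenE)
  hence "(\<lambda>m. r * (aS k m * (r^2)^m)) sums sinh (k*r)" by (rule sums_even_iff)
  hence "(\<lambda>m. aS k m * (r^2)^m) sums (sinh (k*r) / r)" using assms by (rule sums_mult_D)
  thus ?thesis unfolding PS_def by (rule sums_unique[symmetric])
qed



lemma summable_diffs_all: "(\<And>y. summable (\<lambda>n. c n * y^n)) \<Longrightarrow> summable (\<lambda>n. diffs c n * (y::real)^n)"
  by (rule termdiff_converges_all)

lemma PS_deriv[derivative_intros]:
  assumes "\<And>y. summable (\<lambda>n. c n * y^n)" "(f has_real_derivative f') (at x within s)"
  shows "((\<lambda>x. PS c (f x)) has_real_derivative (PS (diffs c) (f x) * f')) (at x within s)"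
  using DERIV_chain2[OF termdiffs_strong_converges_everywhere[OF assms(1)] assms(2)] unfolding PS_def .

lemma summable_daS: "summable (\<lambda>n. diffs (aS k) n * y^n)"
  by (rule summable_diffs_all, rule summable_aS)
lemma summable_dbC: "summable (\<lambda>n. diffs (bC k) n * y^n)"
  by (rule summable_diffs_all, rule summable_bC)
lemma summable_ddaS: "summable (\<lambda>n. diffs (diffs (aS k)) n * y^n)"
  by (rule summable_diffs_all, rule summable_daS)
lemma summable_ddbC: "summable (\<lambda>n. diffs (diffs (bC k)) n * y^n)"
  by (rule summable_diffs_all, rule summable_dbC)

lemmas summ = summable_aS summable_bC summable_daS summable_dbC summable_ddaS summable_ddbC

definition Nf :: "real \<Rightarrow> real \<Rightarrow> real" where "Nf \<beta> u = PS (aS (2*pi/\<beta>)) u"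
definition Mf :: "real \<Rightarrow> real \<Rightarrow> real" where "Mf \<beta> u = PS (bC (2*pi/\<beta>)) u"
definition N1 :: "real \<Rightarrow> real \<Rightarrow> real" where "N1 \<beta> u = PS (diffs (aS (2*pi/\<beta>))) u"
definition M1 :: "real \<Rightarrow> real \<Rightarrow> real" where "M1 \<beta> u = PS (diffs (bC (2*pi/\<beta>))) u"
definition den :: "real \<Rightarrow> real \<Rightarrow> real \<Rightarrow> real" where
  "den \<beta> t u = PS (bC (2*pi/\<beta>)) u - cos (2*pi*t/\<beta>)"
definition Qf :: "real \<Rightarrow> real \<Rightarrow> real \<Rightarrow> real \<Rightarrow> real" where
  "Qf \<beta> \<rho> t u = 1 + pi*\<rho>^2/\<beta> * (PS (aS (2*pi/\<beta>)) u / (PS (bC (2*pi/\<beta>)) u - cos (2*pi*t/\<beta>)))"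
definition Lu :: "real \<Rightarrow> real \<Rightarrow> real \<Rightarrow> real \<Rightarrow> real" where
  "Lu \<beta> \<rho> t u = (pi*\<rho>^2/\<beta> *
     ((PS (diffs (aS (2*pi/\<beta>))) u * (PS (bC (2*pi/\<beta>)) u - cos (2*pi*t/\<beta>))
       - PS (aS (2*pi/\<beta>)) u * PS (diffs (bC (2*pi/\<beta>))) u) / (PS (bC (2*pi/\<beta>)) u - cos (2*pi*t/\<beta>))^2))
     / Qf \<beta> \<rho> t u"
definition Lt :: "real \<Rightarrow> real \<Rightarrow> real \<Rightarrow> real \<Rightarrow> real" where
  "Lt \<beta> \<rho> t u = (pi*\<rho>^2/\<beta> *
     (- PS (aS (2*pi/\<beta>)) u * (sin (2*pi*t/\<beta>) * (2*pi/\<beta>)) / (PS (bC (2*pi/\<beta>)) u - cos (2*pi*t/\<beta>))^2))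
     / Qf \<beta> \<rho> t u"



lemma algLu:
  fixes k b N N1 M1 d :: real
  assumes "d \<noteq> 0" "b \<noteq> 0"
  shows "(N1*k*(b*d) - k*N*(M1*b)) / ((1 + k*N/(b*d)) * (b*d*(b*d))) = (k/b*((N1*d - N*M1)/d^2)) / (1 + k/b*(N/d))"
proof -
  define X where "X = N1*d - N*M1"
  define q where "q = 1 + k/b*(N/d)"
  have 1: "N1*k*(b*d) - k*N*(M1*b) = b*(k*X)" unfolding X_def by (simp add: algebra_simps)
  have 2: "(1 + k*N/(b*d)) * (b*d*(b*d)) = b*(q*(b*d*d))" unfolding q_def by (simp add: mult_ac)
  have "(N1*k*(b*d) - k*N*(M1*b)) / ((1 + k*N/(b*d)) * (b*d*(b*d))) = (k*X)/(q*(b*d*d))"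
    unfolding 1 2 by (rule mult_divide_mult_cancel_left[OF assms(2)])
  also have "\<dots> = (k/b*(X/d^2)) / q" by (simp add: divide_inverse mult_ac power2_eq_square)
  finally show ?thesis unfolding X_def q_def .
qed

lemma Lfun_du:
  assumes "PS (bC (2*pi/\<beta>)) u - cos (2*pi*t/\<beta>) \<noteq> 0" "Qf \<beta> \<rho> t u > 0" "\<beta> \<noteq> 0"
  shows "((\<lambda>u. ln (Qf \<beta> \<rho> t u)) has_real_derivative Lu \<beta> \<rho> t u) (at u)"
  unfolding Qf_def
  using assms apply (auto intro!: derivative_eq_intros simp: summ Qf_def)
  unfolding Lu_def Qf_def by (rule algLu) auto

lemma Lfun_dt:
  assumes "PS (bC (2*pi/\<beta>)) u - cos (2*pi*t/\<beta>) \<noteq> 0" "Qf \<beta> \<rho> t u > 0" "\<beta> \<noteq> 0"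
  shows "((\<lambda>t. ln (Qf \<beta> \<rho> t u)) has_real_derivative Lt \<beta> \<rho> t u) (at t)"
  unfolding Qf_def
  using assms apply (auto intro!: derivative_eq_intros simp: summ Qf_def)
  unfolding Lt_def Qf_def by (simp add: divide_inverse mult_ac power2_eq_square)

lemma Lu_dt:
  assumes "PS (bC (2*pi/\<beta>)) u - cos (2*pi*t/\<beta>) \<noteq> 0" "Qf \<beta> \<rho> t u \<noteq> 0" "\<beta> \<noteq> 0"
  shows "(\<lambda>t. Lu \<beta> \<rho> t u) differentiable (at t)"
  unfolding real_differentiable_def Lu_def Qf_def
  apply (rule exI)
  using assms by (auto intro!: derivative_eq_intros simp: summ Qf_def)
lemma Lu_du:
  assumes "PS (bC (2*pi/\<beta>)) u - cos (2*pi*t/\<beta>) \<noteq> 0" "Qf \<beta> \<rho> t u \<noteq> 0" "\<beta> \<noteq> 0"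
  shows "(\<lambda>u. Lu \<beta> \<rho> t u) differentiable (at u)"
  unfolding real_differentiable_def Lu_def Qf_def
  apply (rule exI)
  using assms by (auto intro!: derivative_eq_intros simp: summ Qf_def)

lemma Lt_dt:
  assumes "PS (bC (2*pi/\<beta>)) u - cos (2*pi*t/\<beta>) \<noteq> 0" "Qf \<beta> \<rho> t u \<noteq> 0" "\<beta> \<noteq> 0"
  shows "(\<lambda>t. Lt \<beta> \<rho> t u) differentiable (at t)"
  unfolding real_differentiable_def Lt_def Qf_def
  apply (rule exI)
  using assms by (auto intro!: derivative_eq_intros simp: summ Qf_def)

lemma Lt_du:
  assumes "PS (bC (2*pi/\<beta>)) u - cos (2*pi*t/\<beta>) \<noteq> 0" "Qf \<beta> \<rho> t u \<noteq> 0" "\<beta> \<noteq> 0"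
  shows "(\<lambda>u. Lt \<beta> \<rho> t u) differentiable (at u)"
  unfolding real_differentiable_def Lt_def Qf_def
  apply (rule exI)
  using assms by (auto intro!: derivative_eq_intros simp: summ Qf_def)


lemma PS_zero: "PS c 0 = c 0" by (simp add: PS_def)

lemma M_ge1: assumes "u \<ge> 0" shows "PS (bC k) u \<ge> 1"
proof (cases "u = 0")
  case True thus ?thesis by (simp add: PS_zero bC_def)
next
  case False
  hence "sqrt u \<noteq> 0" using assms by simp
  moreover have "u = (sqrt u)^2" using assms by simp
  ultimately show ?thesis using PS_bC[of k "sqrt u"] cosh_real_ge_1 by metis
qed

lemma N_pos: assumes "u \<ge> 0" "k > 0" shows "PS (aS k) u > 0"
proof (cases "u = 0")
  case True thus ?thesis using assms by (simp add: PS_zero aS_def)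
next
  case False
  hence r: "sqrt u > 0" using assms by simp
  have "u = (sqrt u)^2" using assms by simp
  hence "PS (aS k) u = sinh (k * sqrt u) / sqrt u" using PS_aS[of "sqrt u" k] r by simp
  thus ?thesis using r assms by simp
qed

lemma den_pos:
  assumes "\<beta> > 0" "cos (2*pi*t/\<beta>) \<noteq> 1" "u \<ge> 0"
  shows "PS (bC (2*pi/\<beta>)) u - cos (2*pi*t/\<beta>) > 0"
  using M_ge1[OF assms(3), of "2*pi/\<beta>"] cos_le_one[of "2*pi*t/\<beta>"] assms(2) by linarith

lemma Qf_pos:
  assumes "\<beta> > 0" "cos (2*pi*t/\<beta>) \<noteq> 1" "u \<ge> 0"
  shows "Qf \<beta> \<rho> t u > 0"
proof -
  have "PS (aS (2*pi/\<beta>)) u > 0" using assms by (intro N_pos) auto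
  moreover note den_pos[OF assms]
  moreover have "pi*\<rho>^2/\<beta> \<ge> 0" using assms by simp
  ultimately have "pi*\<rho>^2/\<beta> * (PS (aS (2*pi/\<beta>)) u / (PS (bC (2*pi/\<beta>)) u - cos (2*pi*t/\<beta>))) \<ge> 0"
    using assms by (intro mult_nonneg_nonneg divide_nonneg_pos) auto
  thus ?thesis unfolding Qf_def by linarith
qed

lemma Prepot_eq:
  assumes "\<beta> > 0" "cos (2*pi*t/\<beta>) \<noteq> 1"
  shows "Prepot \<beta> \<rho> t y = Qf \<beta> \<rho> t (y \<bullet> y)"
proof (cases "norm y = 0")
  case True
  hence "y = 0" by simp
  thus ?thesis by (simp add: Prepot_def Qf_def PS_zero aS_def bC_def)
next
  case False
  hence r: "norm y \<noteq> 0" by simp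
  have u: "y \<bullet> y = (norm y)^2" by (simp add: power2_norm_eq_inner)
  have a: "PS (aS (2*pi/\<beta>)) (y \<bullet> y) = sinh (2*pi*norm y/\<beta>) / norm y"
    using PS_aS[OF r, of "2*pi/\<beta>"] u by simp
  have b: "PS (bC (2*pi/\<beta>)) (y \<bullet> y) = cosh (2*pi*norm y/\<beta>)"
    using PS_bC[of "2*pi/\<beta>" "norm y"] u by simp
  show ?thesis using r unfolding Prepot_def Qf_def Let_def a b
    by (simp add: divide_inverse mult_ac)
qed

lemma lnPi_eq:
  assumes "\<beta> > 0" "cos (2*pi*t/\<beta>) \<noteq> 1"
  shows "lnPi \<beta> \<rho> (t, y) = ln (Qf \<beta> \<rho> t (y \<bullet> y))"
  using Prepot_eq[OF assms] by (simp add: lnPi_def)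

lemma inner_line: "(y + h *\<^sub>R axis i 1) \<bullet> (y + h *\<^sub>R axis i 1) = y \<bullet> y + 2*h*(y$i) + h^2"
  for y :: "real^'n"
  by (simp add: inner_add_left inner_add_right inner_axis inner_axis' inner_axis_axis
      inner_commute power2_eq_square algebra_simps)

lemma edir_sp: "k \<noteq> 4 \<Longrightarrow> edir k = (0, axis (sidx k) 1)" by (simp add: edir_def)

lemma pd_sp:
  assumes "\<beta> > 0" "cos (2*pi*t/\<beta>) \<noteq> 1" "k \<noteq> 4"
  shows "pd k (lnPi \<beta> \<rho>) (t,y) = Lu \<beta> \<rho> t (y \<bullet> y) * (2 * y $ sidx k)"
proof -
  let ?c = "y $ sidx k"
  have f: "(\<lambda>h. lnPi \<beta> \<rho> ((t,y) + h *\<^sub>R edir k)) = (\<lambda>h. ln (Qf \<beta> \<rho> t (y \<bullet> y + 2*h*?c + h^2)))"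
    by (rule ext) (simp add: edir_sp[OF assms(3)] lnPi_eq[OF assms(1,2)] inner_line)
  have d1: "((\<lambda>h. y \<bullet> y + 2*h*?c + h^2) has_real_derivative 2*?c) (at 0)"
    by (auto intro!: derivative_eq_intros)
  have d0: "((\<lambda>u. ln (Qf \<beta> \<rho> t u)) has_real_derivative Lu \<beta> \<rho> t (y \<bullet> y)) (at ((\<lambda>h. y \<bullet> y + 2*h*?c + h^2) 0))"
    using Lfun_du[of \<beta> "y \<bullet> y" t \<rho>] den_pos[OF assms(1,2)] Qf_pos[OF assms(1,2)] assms(1)
    by (simp add: less_le)
  have "((\<lambda>h. ln (Qf \<beta> \<rho> t (y \<bullet> y + 2*h*?c + h^2))) has_real_derivative Lu \<beta> \<rho> t (y \<bullet> y) * (2*?c)) (at 0)"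
    using DERIV_chain2[OF d0 d1] .
  thus ?thesis unfolding pd_def f by (rule DERIV_imp_deriv)
qed

lemma open_G: "\<beta> \<noteq> 0 \<Longrightarrow> open {h. cos (2*pi*(t+h)/\<beta>) \<noteq> 1}"
  by (rule open_Collect_neq) (auto intro!: continuous_intros)

lemma pd_4:
  assumes "\<beta> > 0" "cos (2*pi*t/\<beta>) \<noteq> 1"
  shows "pd 4 (lnPi \<beta> \<rho>) (t,y) = Lt \<beta> \<rho> t (y \<bullet> y)"
proof -
  have d1: "((\<lambda>h. t + h) has_real_derivative 1) (at 0)"
    by (auto intro!: derivative_eq_intros)
  have d0: "((\<lambda>t. ln (Qf \<beta> \<rho> t (y \<bullet> y))) has_real_derivative Lt \<beta> \<rho> t (y \<bullet> y)) (at ((\<lambda>h. t + h) 0))"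
    using Lfun_dt[of \<beta> "y \<bullet> y" t \<rho>] den_pos[OF assms(1,2)] Qf_pos[OF assms(1,2)] assms(1)
    by (simp add: less_le)
  have "((\<lambda>h. ln (Qf \<beta> \<rho> (t+h) (y \<bullet> y))) has_real_derivative Lt \<beta> \<rho> t (y \<bullet> y)) (at 0)"
    using DERIV_chain2[OF d0 d1] by simp
  hence "((\<lambda>h. lnPi \<beta> \<rho> ((t,y) + h *\<^sub>R edir 4)) has_real_derivative Lt \<beta> \<rho> t (y \<bullet> y)) (at 0)"
    by (rule has_field_derivative_transform_within_open[OF _ open_G[of \<beta> t]])
       (use assms in \<open>auto simp: edir_def lnPi_eq\<close>)
  thus ?thesis unfolding pd_def by (rule DERIV_imp_deriv)
qed



definition sg :: "nat \<Rightarrow> real" where "sg n = (if n = 4 then 1 else -1)"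

lemma sign_eta: "\<mu> \<in> {1,2,3,4} \<Longrightarrow> \<nu> \<in> {1,2,3,4} \<Longrightarrow> etabar a \<mu> \<nu> * sg \<nu> = sg \<mu> * eta a \<mu> \<nu>"
  by (auto simp: etabar_def eta_def eps_def kd_def sg_def)

lemma pd_par:
  assumes "\<beta> > 0" "cos (2*pi*t/\<beta>) \<noteq> 1"
  shows "pd \<nu> (lnPi \<beta> \<rho>) (t, -y) = sg \<nu> * pd \<nu> (lnPi \<beta> \<rho>) (t,y)"
proof (cases "\<nu> = 4")
  case True thus ?thesis using pd_4[OF assms] by (simp add: sg_def)
next
  case False thus ?thesis using pd_sp[OF assms False] by (simp add: sg_def)
qed

lemma gauge_par:
  assumes "\<beta> > 0" "cos (2*pi*t/\<beta>) \<noteq> 1" "\<mu> \<in> {1,2,3,4}"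
  shows "gaugeA etabar \<beta> \<rho> \<mu> (t, -y) = sg \<mu> *\<^sub>R gaugeA eta \<beta> \<rho> \<mu> (t,y)"
  unfolding gaugeA_def scaleR_sum_right
proof (intro sum.cong refl)
  fix a \<nu> assume "\<nu> \<in> {1::nat,2,3,4}"
  hence "etabar a \<mu> \<nu> * (sg \<nu> * pd \<nu> (lnPi \<beta> \<rho>) (t,y)) = sg \<mu> * (eta a \<mu> \<nu> * pd \<nu> (lnPi \<beta> \<rho>) (t,y))"
    using sign_eta[OF assms(3), of \<nu> a] by (metis mult.assoc)
  thus "(etabar a \<mu> \<nu> * pd \<nu> (lnPi \<beta> \<rho>) (t, - y)) *\<^sub>R tgen a =
        sg \<mu> *\<^sub>R (eta a \<mu> \<nu> * pd \<nu> (lnPi \<beta> \<rho>) (t, y)) *\<^sub>R tgen a"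
    by (simp add: pd_par[OF assms(1,2)])
qed

definition Dfun :: "real \<Rightarrow> real \<Rightarrow> nat \<Rightarrow> point \<Rightarrow> real" where
  "Dfun \<beta> \<rho> \<nu> p = (if \<nu> = 4 then Lt \<beta> \<rho> (fst p) (snd p \<bullet> snd p)
                     else Lu \<beta> \<rho> (fst p) (snd p \<bullet> snd p) * (2 * snd p $ sidx \<nu>))"

lemma pd_D:
  assumes "\<beta> > 0" "cos (2*pi*fst p/\<beta>) \<noteq> 1"
  shows "pd \<nu> (lnPi \<beta> \<rho>) p = Dfun \<beta> \<rho> \<nu> p"
proof -
  obtain t y where p: "p = (t,y)" by (cases p)
  show ?thesis using assms pd_4[of \<beta> t] pd_sp[of \<beta> t] unfolding p Dfun_def by auto
qed

lemma diffI: "(f has_real_derivative D) (at x) \<Longrightarrow> f differentiable (at x)"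
  using real_differentiable_def by blast

lemma D_diff:
  assumes "\<beta> > 0" "cos (2*pi*\<tau>/\<beta>) \<noteq> 1"
  shows "(\<lambda>h. Dfun \<beta> \<rho> \<nu> ((\<tau>,y) + h *\<^sub>R edir \<mu>)) differentiable (at 0)"
proof -
  have c1: "PS (bC (2*pi/\<beta>)) (y \<bullet> y) - cos (2*pi*\<tau>/\<beta>) \<noteq> 0"
    using den_pos[OF assms, of "y \<bullet> y"] by simp
  have c2: "Qf \<beta> \<rho> \<tau> (y \<bullet> y) \<noteq> 0"
    using Qf_pos[OF assms, of "y \<bullet> y" \<rho>] by simp
  have b: "\<beta> \<noteq> 0" using assms by simp
  show ?thesis
  proof (cases "\<mu> = 4")
    case True
    have e: "(\<tau>,y) + h *\<^sub>R edir \<mu> = (\<tau> + h, y)" for h using True by (simp add: edir_def)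
    have f: "(\<lambda>h. \<tau> + h) differentiable (at 0)"
      by (rule diffI) (auto intro!: derivative_eq_intros)
    have gt: "(\<lambda>t. Lt \<beta> \<rho> t (y \<bullet> y)) differentiable (at ((\<lambda>h. \<tau> + h) 0))"
      using Lt_dt[OF c1 c2 b] by simp
    have gu: "(\<lambda>t. Lu \<beta> \<rho> t (y \<bullet> y)) differentiable (at ((\<lambda>h. \<tau> + h) 0))"
      using Lu_dt[OF c1 c2 b] by simp
    have t1: "(\<lambda>h. Lt \<beta> \<rho> (\<tau> + h) (y \<bullet> y)) differentiable (at 0)"
      using differentiable_chain_at[OF f gt] by (simp add: o_def)
    have t2: "(\<lambda>h. Lu \<beta> \<rho> (\<tau> + h) (y \<bullet> y)) differentiable (at 0)"
      using differentiable_chain_at[OF f gu] by (simp add: o_def)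
    show ?thesis unfolding e Dfun_def using t1 t2 by (cases "\<nu> = 4") auto
  next
    case False
    let ?i = "sidx \<mu>"
    have e: "(\<tau>,y) + h *\<^sub>R edir \<mu> = (\<tau>, y + h *\<^sub>R axis ?i 1)" for h using False by (simp add: edir_sp)
    have f: "(\<lambda>h. y \<bullet> y + 2*h*(y $ ?i) + h^2) differentiable (at 0)"
      by (rule diffI) (auto intro!: derivative_eq_intros)
    have gt: "(\<lambda>u. Lt \<beta> \<rho> \<tau> u) differentiable (at ((\<lambda>h. y \<bullet> y + 2*h*(y $ ?i) + h^2) 0))"
      using Lt_du[OF c1 c2 b] by simp
    have gu: "(\<lambda>u. Lu \<beta> \<rho> \<tau> u) differentiable (at ((\<lambda>h. y \<bullet> y + 2*h*(y $ ?i) + h^2) 0))"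
      using Lu_du[OF c1 c2 b] by simp
    have t1: "(\<lambda>h. Lt \<beta> \<rho> \<tau> (y \<bullet> y + 2*h*(y $ ?i) + h^2)) differentiable (at 0)"
      using differentiable_chain_at[OF f gt] by (simp add: o_def)
    have t2: "(\<lambda>h. Lu \<beta> \<rho> \<tau> (y \<bullet> y + 2*h*(y $ ?i) + h^2)) differentiable (at 0)"
      using differentiable_chain_at[OF f gu] by (simp add: o_def)
    have t3: "(\<lambda>h. 2 * (y + h *\<^sub>R axis ?i 1) $ sidx \<nu>) differentiable (at 0)"
      by (rule diffI) (auto intro!: derivative_eq_intros)
    show ?thesis unfolding e Dfun_def using t1 t2 t3
      by (cases "\<nu> = 4") (auto simp: inner_line)
  qed
qed



lemma pt_par: "((\<tau>::real), - y) + h *\<^sub>R edir \<mu> =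
   (fst ((\<tau>,y) + (sg \<mu> * h) *\<^sub>R edir \<mu>), - snd ((\<tau>,y) + (sg \<mu> * h) *\<^sub>R edir \<mu>))"
  by (auto simp: edir_def sg_def algebra_simps)

lemma fst_line: "fst ((\<tau>,y) + (sg \<mu> * h) *\<^sub>R edir \<mu>) = \<tau> + (if \<mu> = 4 then h else 0)"
  by (auto simp: edir_def sg_def)

lemma fst_line': "fst ((\<tau>,y) + h *\<^sub>R edir \<mu>) = \<tau> + (if \<mu> = 4 then h else 0)"
  by (auto simp: edir_def)

lemma pdM_par:
  assumes "\<beta> > 0" "cos (2*pi*\<tau>/\<beta>) \<noteq> 1" "\<nu> \<in> {1,2,3,4}"
  shows "pdM \<mu> (gaugeA etabar \<beta> \<rho> \<nu>) (\<tau>, -y) = (sg \<mu> * sg \<nu>) *\<^sub>R pdM \<mu> (gaugeA eta \<beta> \<rho> \<nu>) (\<tau>, y)"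
proof -
  define E where "E = (\<lambda>h. \<Sum>a\<in>{1::nat,2,3}. \<Sum>\<nu>'\<in>{1::nat,2,3,4}.
        (eta a \<nu> \<nu>' * Dfun \<beta> \<rho> \<nu>' ((\<tau>,y) + h *\<^sub>R edir \<mu>)) *\<^sub>R tgen a)"
  define S where "S = {h. cos (2*pi*(\<tau> + (if \<mu> = 4 then h else 0))/\<beta>) \<noteq> 1}"
  define GA where "GA = (\<lambda>h. gaugeA eta \<beta> \<rho> \<nu> ((\<tau>,y) + h *\<^sub>R edir \<mu>))"
  have oS: "open S"
  proof (cases "\<mu> = 4")
    case True thus ?thesis unfolding S_def using open_G[of \<beta> \<tau>] assms by simp
  next
    case False thus ?thesis unfolding S_def by simp
  qed
  have S0: "0 \<in> S" unfolding S_def using assms by simp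
  have EA: "E h = GA h" if "h \<in> S" for h
    unfolding E_def GA_def gaugeA_def
  proof (intro sum.cong refl)
    fix a \<nu>'
    have "cos (2*pi*fst ((\<tau>,y) + h *\<^sub>R edir \<mu>)/\<beta>) \<noteq> 1" using that unfolding S_def fst_line' by simp
    thus "(eta a \<nu> \<nu>' * Dfun \<beta> \<rho> \<nu>' ((\<tau>, y) + h *\<^sub>R edir \<mu>)) *\<^sub>R tgen a =
          (eta a \<nu> \<nu>' * pd \<nu>' (lnPi \<beta> \<rho>) ((\<tau>, y) + h *\<^sub>R edir \<mu>)) *\<^sub>R tgen a"
      using pd_D[OF assms(1)] by simp
  qed
  have Ed: "E differentiable (at 0)"
  proof -
    have Dd: "(\<lambda>h. Dfun \<beta> \<rho> \<nu>' ((\<tau>,y) + h *\<^sub>R edir \<mu>)) differentiable (at 0)" for \<nu>'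
      by (rule D_diff[OF assms(1,2)])
    have T: "(\<lambda>h. (eta a \<nu> \<nu>' * Dfun \<beta> \<rho> \<nu>' ((\<tau>,y) + h *\<^sub>R edir \<mu>)) *\<^sub>R tgen a) differentiable (at 0)" for a \<nu>'
      by (rule differentiable_scaleR[OF differentiable_mult[OF differentiable_const Dd] differentiable_const])
    have T2: "(\<lambda>h. \<Sum>\<nu>'\<in>{1::nat,2,3,4}. (eta a \<nu> \<nu>' * Dfun \<beta> \<rho> \<nu>' ((\<tau>,y) + h *\<^sub>R edir \<mu>)) *\<^sub>R tgen a) differentiable (at 0)" for a
      by (rule differentiable_sum, simp, rule ballI, rule T)
    show ?thesis unfolding E_def by (rule differentiable_sum, simp, rule ballI, rule T2)
  qed
  then obtain V where V: "(E has_vector_derivative V) (at 0)"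
    using vector_derivative_works by blast
  have A: "(GA has_vector_derivative V) (at 0)"
    by (rule has_vector_derivative_transform_within_open[OF V oS S0 EA])
  have pA: "pdM \<mu> (gaugeA eta \<beta> \<rho> \<nu>) (\<tau>, y) = V"
    unfolding pdM_def using A unfolding GA_def by (rule vector_derivative_at)
  have f: "((\<lambda>h. sg \<mu> * h) has_vector_derivative sg \<mu>) (at 0)"
    unfolding has_real_derivative_iff_has_vector_derivative[symmetric]
    by (auto intro!: derivative_eq_intros)
  have A': "(GA has_vector_derivative V) (at ((\<lambda>h. sg \<mu> * h) 0))" using A by simp
  have C1: "((GA \<circ> (\<lambda>h. sg \<mu> * h)) has_vector_derivative (sg \<mu> *\<^sub>R V)) (at 0)"
    by (rule vector_diff_chain_at[OF f A'])
  have C2: "((\<lambda>h. sg \<nu> *\<^sub>R (GA \<circ> (\<lambda>h. sg \<mu> * h)) h) has_vector_derivative (sg \<nu> *\<^sub>R (sg \<mu> *\<^sub>R V))) (at 0)"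
    by (rule bounded_linear.has_vector_derivative[OF bounded_linear_scaleR_right C1])
  have CG: "sg \<nu> *\<^sub>R (GA \<circ> (\<lambda>h. sg \<mu> * h)) h = gaugeA etabar \<beta> \<rho> \<nu> ((\<tau>, -y) + h *\<^sub>R edir \<mu>)"
    if "h \<in> S" for h
  proof -
    have "cos (2*pi*fst ((\<tau>,y) + (sg \<mu> * h) *\<^sub>R edir \<mu>)/\<beta>) \<noteq> 1" using that unfolding S_def fst_line by simp
    from gauge_par[OF assms(1) this assms(3), of \<rho> "snd ((\<tau>,y) + (sg \<mu> * h) *\<^sub>R edir \<mu>)"]
    have "gaugeA etabar \<beta> \<rho> \<nu> (fst ((\<tau>,y) + (sg \<mu> * h) *\<^sub>R edir \<mu>), - snd ((\<tau>,y) + (sg \<mu> * h) *\<^sub>R edir \<mu>))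
       = sg \<nu> *\<^sub>R gaugeA eta \<beta> \<rho> \<nu> ((\<tau>,y) + (sg \<mu> * h) *\<^sub>R edir \<mu>)" by (simp only: prod.collapse)
    thus ?thesis unfolding GA_def o_def pt_par[of \<tau> y h \<mu>] by (rule sym)
  qed
  have C3: "((\<lambda>h. gaugeA etabar \<beta> \<rho> \<nu> ((\<tau>, -y) + h *\<^sub>R edir \<mu>)) has_vector_derivative (sg \<nu> *\<^sub>R (sg \<mu> *\<^sub>R V))) (at 0)"
    by (rule has_vector_derivative_transform_within_open[OF C2 oS S0 CG])
  show ?thesis using vector_derivative_at[OF C3] pA unfolding pdM_def by (simp add: mult.commute)
qed



lemma mm_scaleR: "(a *\<^sub>R X) ** Y = a *\<^sub>R (X ** Y)" "X ** (a *\<^sub>R Y) = a *\<^sub>R (X ** Y)" for X Y :: mat2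
  by (simp_all add: matrix_matrix_mult_def vec_eq_iff scaleR_sum_right)
lemma comm_scaleR: "comm (a *\<^sub>R X) (b *\<^sub>R Y) = (a*b) *\<^sub>R comm X Y"
  unfolding comm_def mm_scaleR by (simp add: scaleR_diff_right mult.commute)
lemma cmul_scaleR: "cmul c (s *\<^sub>R M) = s *\<^sub>R cmul c M"
  by (simp add: cmul_def vec_eq_iff)

lemma fieldF_par:
  assumes "\<beta> > 0" "cos (2*pi*\<tau>/\<beta>) \<noteq> 1" "\<mu> \<in> {1,2,3,4}" "\<nu> \<in> {1,2,3,4}"
  shows "fieldF etabar \<beta> \<rho> \<mu> \<nu> (\<tau>, -y) = (sg \<mu> * sg \<nu>) *\<^sub>R fieldF eta \<beta> \<rho> \<mu> \<nu> (\<tau>, y)"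
  unfolding fieldF_def pdM_par[OF assms(1,2,3)] pdM_par[OF assms(1,2,4)]
    gauge_par[OF assms(1,2,3)] gauge_par[OF assms(1,2,4)] comm_scaleR cmul_scaleR
  by (simp add: scaleR_diff_right mult.commute)

lemma wilson_par:
  assumes "\<beta> > 0" "cos (2*pi*\<tau>/\<beta>) \<noteq> 1"
  shows "wilson etabar \<beta> \<rho> \<tau> (-y) (-z) = wilson eta \<beta> \<rho> \<tau> y z"
proof -
  have eq: "(\<Sum>k\<in>{1,2,3}. ((-z - -y) $ sidx k) *\<^sub>R gaugeA etabar \<beta> \<rho> k (\<tau>, -y + s *\<^sub>R (-z - -y)))
        = (\<Sum>k\<in>{1,2,3}. ((z - y) $ sidx k) *\<^sub>R gaugeA eta \<beta> \<rho> k (\<tau>, y + s *\<^sub>R (z - y)))" for s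
  proof (intro sum.cong refl)
    fix k :: nat assume k: "k \<in> {1,2,3}"
    have p: "-y + s *\<^sub>R (-z - -y) = -(y + s *\<^sub>R (z - y))" by (simp add: algebra_simps)
    have "k \<in> {1,2,3,4}" using k by auto
    from gauge_par[OF assms this, of \<rho> "y + s *\<^sub>R (z - y)"] k
    show "((-z - -y) $ sidx k) *\<^sub>R gaugeA etabar \<beta> \<rho> k (\<tau>, -y + s *\<^sub>R (-z - -y)) =
          ((z - y) $ sidx k) *\<^sub>R gaugeA eta \<beta> \<rho> k (\<tau>, y + s *\<^sub>R (z - y))"
      unfolding p by (auto simp: sg_def)
  qed
  show ?thesis by (simp only: wilson_def eq)
qed

lemma mat0_mult: "(0::mat2) ** X = 0" "X ** (0::mat2) = 0"
  by (simp_all add: matrix_matrix_mult_def vec_eq_iff)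

lemma zero_case: "integrandI S \<beta> 0 a \<tau> x = 0"
proof -
  have l: "lnPi \<beta> 0 = (\<lambda>p. 0)" by (rule ext) (simp add: lnPi_def Prepot_def Let_def)
  have pd0: "pd \<nu> (lnPi \<beta> 0) p = 0" for \<nu> p
    unfolding l pd_def by (rule DERIV_imp_deriv) simp
  have g0: "gaugeA S \<beta> 0 \<mu> = (\<lambda>p. 0)" for \<mu>
    by (rule ext) (simp add: gaugeA_def pd0)
  have pdM0: "pdM \<mu> (\<lambda>p. 0::mat2) p = 0" for \<mu> p
    unfolding pdM_def by (rule vector_derivative_at) simp
  have F0: "fieldF S \<beta> 0 \<mu> \<nu> p = 0" for \<mu> \<nu> p
    unfolding fieldF_def g0 pdM0 by (simp add: comm_def mat0_mult cmul_def vec_eq_iff)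
  show ?thesis unfolding integrandI_def F0 by (simp add: mat0_mult trace_def)
qed

lemma trace_scaleR: "trace (s *\<^sub>R (M::mat2)) = s *\<^sub>R trace M"
  by (simp add: trace_def scaleR_sum_right)

lemma sg_sq: "(sg \<mu> * sg \<nu>) * (sg \<mu> * sg \<nu>) = 1" by (simp add: sg_def)

theorem proposition4:
  fixes \<beta> \<rho> \<tau> :: real and x :: "real^3" and a :: nat
  assumes "\<beta> > 0" and "\<rho> \<ge> 0"
    and "\<rho> > 0 \<longrightarrow> cos (2 * pi * \<tau> / \<beta>) \<noteq> 1"
    and "a \<in> {1,2,3}"
  shows "integrandI eta \<beta> \<rho> a \<tau> x = integrandI etabar \<beta> \<rho> a \<tau> (- x)"
proof (cases "\<rho> = 0")
  case True thus ?thesis by (simp add: zero_case)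
next
  case False
  hence G: "cos (2 * pi * \<tau> / \<beta>) \<noteq> 1" using assms by simp
  have W0: "wilson etabar \<beta> \<rho> \<tau> 0 (-x) = wilson eta \<beta> \<rho> \<tau> 0 x"
    using wilson_par[OF assms(1) G, of \<rho> 0 x] by simp
  have W1: "wilson etabar \<beta> \<rho> \<tau> (-x) 0 = wilson eta \<beta> \<rho> \<tau> x 0"
    using wilson_par[OF assms(1) G, of \<rho> x 0] by simp
  show ?thesis unfolding integrandI_def W0 W1
  proof (intro sum.cong refl)
    fix \<mu> \<nu> :: nat assume m: "\<mu> \<in> {1,2,3,4}" and n: "\<nu> \<in> {1,2,3,4}"
    define s where "s = sg \<mu> * sg \<nu>"
    have ss: "s * s = 1" unfolding s_def by (rule sg_sq)
    have F0: "fieldF etabar \<beta> \<rho> \<mu> \<nu> (\<tau>, 0) = s *\<^sub>R fieldF eta \<beta> \<rho> \<mu> \<nu> (\<tau>, 0)"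
      using fieldF_par[OF assms(1) G m n, of \<rho> 0] unfolding s_def by simp
    have F1: "fieldF etabar \<beta> \<rho> \<mu> \<nu> (\<tau>, -x) = s *\<^sub>R fieldF eta \<beta> \<rho> \<mu> \<nu> (\<tau>, x)"
      using fieldF_par[OF assms(1) G m n, of \<rho> x] unfolding s_def by simp
    show "trace (tgen a ** fieldF eta \<beta> \<rho> \<mu> \<nu> (\<tau>, 0) ** wilson eta \<beta> \<rho> \<tau> 0 x **
                 fieldF eta \<beta> \<rho> \<mu> \<nu> (\<tau>, x) ** wilson eta \<beta> \<rho> \<tau> x 0) =
          trace (tgen a ** fieldF etabar \<beta> \<rho> \<mu> \<nu> (\<tau>, 0) ** wilson eta \<beta> \<rho> \<tau> 0 x **
                 fieldF etabar \<beta> \<rho> \<mu> \<nu> (\<tau>, - x) ** wilson eta \<beta> \<rho> \<tau> x 0)"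
      unfolding F0 F1
      by (simp add: mm_scaleR trace_scaleR ss)
  qed
qed


end
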